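(* Let $S$ be a finite non-abelian simple group and let $p$ be a prime with $\gcd(|S|,p)=1$. Then $S\times\mathbb{Z}_p$ is $\psi$-normal divisible. In particular, for every prime $p$ with $\gcd(60,p)=1$, the group $A_5\times\mathbb{Z}_p$ is $\psi$-normal divisible.
   Context: For a finite group $G$, $\psi(G)=\sum_{x\in G} o(x)$ denotes the sum of the orders of all elements of $G$. A finite group $G$ is called $\psi$-normal divisible if $\psi(H)$ divides $\psi(G)$ for every normal subgroup $H$ of $G$. *)

theory Defs
  imports "HOL-Algebra.Algebra"
begin

definition psi :: "('a, 'b) monoid_scheme \<Rightarrow> nat" where
  "psi G = (\<Sum>x\<in>carrier G. group.ord G x)"

definition psi_normal_divisible :: "('a, 'b) monoid_scheme \<Rightarrow> bool" where
  "psi_normal_divisible G \<longleftrightarrow>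
     (\<forall>H. H \<lhd> G \<longrightarrow> psi (G\<lparr>carrier := H\<rparr>) dvd psi G)"

end

theory Submission
  imports Defs
begin


lemma ord_sub:
  assumes G: "group G" and H: "subgroup H G"
  shows "group.ord (G\<lparr>carrier := H\<rparr>) x = group.ord G x"
proof -
  have G': "group (G\<lparr>carrier := H\<rparr>)" by (rule group.subgroup_imp_group[OF G H])
  show ?thesis unfolding group.ord_def[OF G] group.ord_def[OF G'] by (simp add: nat_pow_def)
qed

lemma psi_sub:
  assumes G: "group G" and H: "subgroup H G"
  shows "psi (G\<lparr>carrier := H\<rparr>) = (\<Sum>x\<in>H. group.ord G x)"
  by (simp add: psi_def ord_sub[OF G H])

lemma pow_DirProd: "(a, b) [^]\<^bsub>G \<times>\<times> H\<^esub> (n::nat) = (a [^]\<^bsub>G\<^esub> n, b [^]\<^bsub>H\<^esub> n)"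
  by (induction n) simp_all

lemma (in group) pow_root:
  assumes "finite (carrier G)" "coprime e (order G)" "e \<noteq> 0"
  shows "\<exists>k::nat. \<forall>x \<in> carrier G. (x [^] (e::nat)) [^] k = x"
proof -
  obtain k y where k: "e * k = order G * y + gcd e (order G)" using bezout_nat[OF assms(3)] by blast
  then have k': "e * k = order G * y + 1" using assms(2) by simp
  have "(x [^] e) [^] k = x" if x: "x \<in> carrier G" for x
  proof -
    have "(x [^] e) [^] k = x [^] (e * k)" using x by (simp add: nat_pow_pow)
    also have "\<dots> = (x [^] order G) [^] y \<otimes> x" using x by (simp add: k' nat_pow_mult nat_pow_pow)
    also have "\<dots> = x" using x assms(1) by (simp add: pow_order_eq_1)
    finally show ?thesis .
  qed
  then show ?thesis by blast
qed

lemma ord_DirProd: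
  assumes G: "group G" and H: "group H" and a: "a \<in> carrier G" and b: "b \<in> carrier H"
    and cop: "coprime (group.ord G a) (group.ord H b)"
  shows "group.ord (G \<times>\<times> H) (a, b) = group.ord G a * group.ord H b"
proof -
  interpret G: group G by fact
  interpret H: group H by fact
  interpret GH: group "G \<times>\<times> H" using DirProd_group[OF G H] .
  have "(a,b) \<in> carrier (G \<times>\<times> H)" using a b by simp
  moreover have "\<forall>n::nat. (a,b) [^]\<^bsub>G \<times>\<times> H\<^esub> n = \<one>\<^bsub>G \<times>\<times> H\<^esub> \<longleftrightarrow> group.ord G a * group.ord H b dvd n"
  proof
    fix n :: nat
    have "(a,b) [^]\<^bsub>G \<times>\<times> H\<^esub> n = \<one>\<^bsub>G \<times>\<times> H\<^esub> \<longleftrightarrow> a [^]\<^bsub>G\<^esub> n = \<one>\<^bsub>G\<^esub> \<and> b [^]\<^bsub>H\<^esub> n = \<one>\<^bsub>H\<^esub>"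
      by (simp add: pow_DirProd)
    also have "\<dots> \<longleftrightarrow> group.ord G a dvd n \<and> group.ord H b dvd n"
      using G.pow_eq_id[OF a] H.pow_eq_id[OF b] by simp
    also have "\<dots> \<longleftrightarrow> group.ord G a * group.ord H b dvd n"
      using cop by (meson divides_mult dvd_mult_left dvd_mult_right)
    finally show "(a,b) [^]\<^bsub>G \<times>\<times> H\<^esub> n = \<one>\<^bsub>G \<times>\<times> H\<^esub> \<longleftrightarrow> group.ord G a * group.ord H b dvd n" .
  qed
  ultimately show ?thesis using GH.ord_unique by blast
qed

lemma normal_fst:
  assumes G: "group G" and H: "group H" and N: "N \<lhd> G \<times>\<times> H"
  shows "{a \<in> carrier G. (a, \<one>\<^bsub>H\<^esub>) \<in> N} \<lhd> G"
proof -
  interpret G: group G by fact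
  interpret H: group H by fact
  interpret GH: group "G \<times>\<times> H" using DirProd_group[OF G H] .
  have sub: "subgroup N (G \<times>\<times> H)" using N by (simp add: normal_def)
  show ?thesis
    unfolding G.normal_inv_iff
  proof (intro conjI ballI)
    show "subgroup {a \<in> carrier G. (a, \<one>\<^bsub>H\<^esub>) \<in> N} G"
    proof (rule G.subgroupI)
      show "{a \<in> carrier G. (a, \<one>\<^bsub>H\<^esub>) \<in> N} \<noteq> {}"
        using subgroup.one_closed[OF sub] by auto
      fix a assume "a \<in> {a \<in> carrier G. (a, \<one>\<^bsub>H\<^esub>) \<in> N}"
      then have a: "a \<in> carrier G" "(a, \<one>\<^bsub>H\<^esub>) \<in> N" by auto
      have "inv\<^bsub>G \<times>\<times> H\<^esub> (a, \<one>\<^bsub>H\<^esub>) \<in> N" using subgroup.m_inv_closed[OF sub a(2)] .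
      then show "inv\<^bsub>G\<^esub> a \<in> {a \<in> carrier G. (a, \<one>\<^bsub>H\<^esub>) \<in> N}"
        using a G H by simp
      fix b assume "b \<in> {a \<in> carrier G. (a, \<one>\<^bsub>H\<^esub>) \<in> N}"
      then have b: "b \<in> carrier G" "(b, \<one>\<^bsub>H\<^esub>) \<in> N" by auto
      have "(a, \<one>\<^bsub>H\<^esub>) \<otimes>\<^bsub>G \<times>\<times> H\<^esub> (b, \<one>\<^bsub>H\<^esub>) \<in> N" using subgroup.m_closed[OF sub a(2) b(2)] .
      then show "a \<otimes>\<^bsub>G\<^esub> b \<in> {a \<in> carrier G. (a, \<one>\<^bsub>H\<^esub>) \<in> N}" using a b by simp
    qed auto
  next
    fix x h assume x: "x \<in> carrier G" and "h \<in> {a \<in> carrier G. (a, \<one>\<^bsub>H\<^esub>) \<in> N}"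
    then have h: "h \<in> carrier G" "(h, \<one>\<^bsub>H\<^esub>) \<in> N" by auto
    have "(x, \<one>\<^bsub>H\<^esub>) \<otimes>\<^bsub>G \<times>\<times> H\<^esub> (h, \<one>\<^bsub>H\<^esub>) \<otimes>\<^bsub>G \<times>\<times> H\<^esub> inv\<^bsub>G \<times>\<times> H\<^esub> (x, \<one>\<^bsub>H\<^esub>) \<in> N"
      using normal.inv_op_closed2[OF N, of "(x, \<one>\<^bsub>H\<^esub>)" "(h, \<one>\<^bsub>H\<^esub>)"] h x by simp
    then show "x \<otimes>\<^bsub>G\<^esub> h \<otimes>\<^bsub>G\<^esub> inv\<^bsub>G\<^esub> x \<in> {a \<in> carrier G. (a, \<one>\<^bsub>H\<^esub>) \<in> N}"
      using x h G H by simp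
  qed
qed

lemma normal_snd:
  assumes G: "group G" and H: "group H" and N: "N \<lhd> G \<times>\<times> H"
  shows "{b \<in> carrier H. (\<one>\<^bsub>G\<^esub>, b) \<in> N} \<lhd> H"
proof -
  interpret G: group G by fact
  interpret H: group H by fact
  interpret GH: group "G \<times>\<times> H" using DirProd_group[OF G H] .
  have sub: "subgroup N (G \<times>\<times> H)" using N by (simp add: normal_def)
  show ?thesis
    unfolding H.normal_inv_iff
  proof (intro conjI ballI)
    show "subgroup {b \<in> carrier H. (\<one>\<^bsub>G\<^esub>, b) \<in> N} H"
    proof (rule H.subgroupI)
      show "{b \<in> carrier H. (\<one>\<^bsub>G\<^esub>, b) \<in> N} \<noteq> {}"
        using subgroup.one_closed[OF sub] by auto
      fix a assume "a \<in> {b \<in> carrier H. (\<one>\<^bsub>G\<^esub>, b) \<in> N}"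
      then have a: "a \<in> carrier H" "(\<one>\<^bsub>G\<^esub>, a) \<in> N" by auto
      have "inv\<^bsub>G \<times>\<times> H\<^esub> (\<one>\<^bsub>G\<^esub>, a) \<in> N" using subgroup.m_inv_closed[OF sub a(2)] .
      then show "inv\<^bsub>H\<^esub> a \<in> {b \<in> carrier H. (\<one>\<^bsub>G\<^esub>, b) \<in> N}"
        using a G H by simp
      fix b assume "b \<in> {b \<in> carrier H. (\<one>\<^bsub>G\<^esub>, b) \<in> N}"
      then have b: "b \<in> carrier H" "(\<one>\<^bsub>G\<^esub>, b) \<in> N" by auto
      have "(\<one>\<^bsub>G\<^esub>, a) \<otimes>\<^bsub>G \<times>\<times> H\<^esub> (\<one>\<^bsub>G\<^esub>, b) \<in> N" using subgroup.m_closed[OF sub a(2) b(2)] .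
      then show "a \<otimes>\<^bsub>H\<^esub> b \<in> {b \<in> carrier H. (\<one>\<^bsub>G\<^esub>, b) \<in> N}" using a b by simp
    qed auto
  next
    fix x h assume x: "x \<in> carrier H" and "h \<in> {b \<in> carrier H. (\<one>\<^bsub>G\<^esub>, b) \<in> N}"
    then have h: "h \<in> carrier H" "(\<one>\<^bsub>G\<^esub>, h) \<in> N" by auto
    have "(\<one>\<^bsub>G\<^esub>, x) \<otimes>\<^bsub>G \<times>\<times> H\<^esub> (\<one>\<^bsub>G\<^esub>, h) \<otimes>\<^bsub>G \<times>\<times> H\<^esub> inv\<^bsub>G \<times>\<times> H\<^esub> (\<one>\<^bsub>G\<^esub>, x) \<in> N"
      using normal.inv_op_closed2[OF N, of "(\<one>\<^bsub>G\<^esub>, x)" "(\<one>\<^bsub>G\<^esub>, h)"] h x by simp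
    then show "x \<otimes>\<^bsub>H\<^esub> h \<otimes>\<^bsub>H\<^esub> inv\<^bsub>H\<^esub> x \<in> {b \<in> carrier H. (\<one>\<^bsub>G\<^esub>, b) \<in> N}"
      using x h G H by simp
  qed
qed

lemma (in group) sub_pow_closed:
  assumes "subgroup K G" "x \<in> K"
  shows "x [^] (n::nat) \<in> K"
  by (induction n) (simp_all add: subgroup.one_closed[OF assms(1)] subgroup.m_closed[OF assms(1)] assms(2))

lemma normal_split:
  assumes G: "group G" and H: "group H" and fG: "finite (carrier G)" and fH: "finite (carrier H)"
    and cop: "coprime (order G) (order H)" and N: "N \<lhd> G \<times>\<times> H"
  shows "N = {a \<in> carrier G. (a, \<one>\<^bsub>H\<^esub>) \<in> N} \<times> {b \<in> carrier H. (\<one>\<^bsub>G\<^esub>, b) \<in> N}"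
proof -
  interpret G: group G by fact
  interpret H: group H by fact
  interpret GH: group "G \<times>\<times> H" using DirProd_group[OF G H] .
  have sub: "subgroup N (G \<times>\<times> H)" using N by (simp add: normal_def)
  have oH: "order H \<noteq> 0" using H.order_gt_0_iff_finite fH by simp
  have oG: "order G \<noteq> 0" using G.order_gt_0_iff_finite fG by simp
  have copHG: "coprime (order H) (order G)" using cop by (metis coprime_commute)
  obtain k :: nat where k: "\<And>x. x \<in> carrier G \<Longrightarrow> (x [^]\<^bsub>G\<^esub> order H) [^]\<^bsub>G\<^esub> k = x"
    using G.pow_root[OF fG copHG oH] by blast
  obtain j :: nat where j: "\<And>x. x \<in> carrier H \<Longrightarrow> (x [^]\<^bsub>H\<^esub> order G) [^]\<^bsub>H\<^esub> j = x"
    using H.pow_root[OF fH cop oG] by blast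
  show ?thesis
  proof (intro equalityI subsetI)
    fix x assume xN: "x \<in> N"
    obtain a b where x: "x = (a, b)" by (cases x)
    have ab: "a \<in> carrier G" "b \<in> carrier H" using xN x subgroup.subset[OF sub] by auto
    have abN: "(a,b) \<in> N" using xN x by simp
    have e1: "((a,b) [^]\<^bsub>G \<times>\<times> H\<^esub> order H) [^]\<^bsub>G \<times>\<times> H\<^esub> k = (a, \<one>\<^bsub>H\<^esub>)"
      unfolding pow_DirProd using ab fH k H.pow_order_eq_1 by simp
    have 1: "(a, \<one>\<^bsub>H\<^esub>) \<in> N"
      using GH.sub_pow_closed[OF sub GH.sub_pow_closed[OF sub abN, of "order H"], of k] unfolding e1 .
    have e2: "((a,b) [^]\<^bsub>G \<times>\<times> H\<^esub> order G) [^]\<^bsub>G \<times>\<times> H\<^esub> j = (\<one>\<^bsub>G\<^esub>, b)"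
      unfolding pow_DirProd using ab fG j G.pow_order_eq_1 by simp
    have 2: "(\<one>\<^bsub>G\<^esub>, b) \<in> N"
      using GH.sub_pow_closed[OF sub GH.sub_pow_closed[OF sub abN, of "order G"], of j] unfolding e2 .
    show "x \<in> {a \<in> carrier G. (a, \<one>\<^bsub>H\<^esub>) \<in> N} \<times> {b \<in> carrier H. (\<one>\<^bsub>G\<^esub>, b) \<in> N}"
      using 1 2 ab x by simp
  next
    fix x assume "x \<in> {a \<in> carrier G. (a, \<one>\<^bsub>H\<^esub>) \<in> N} \<times> {b \<in> carrier H. (\<one>\<^bsub>G\<^esub>, b) \<in> N}"
    then obtain a b where x: "x = (a,b)" and ab: "a \<in> carrier G" "b \<in> carrier H"
      "(a, \<one>\<^bsub>H\<^esub>) \<in> N" "(\<one>\<^bsub>G\<^esub>, b) \<in> N" by auto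
    have "(a, \<one>\<^bsub>H\<^esub>) \<otimes>\<^bsub>G \<times>\<times> H\<^esub> (\<one>\<^bsub>G\<^esub>, b) \<in> N"
      using subgroup.m_closed[OF sub ab(3,4)] .
    then show "x \<in> N" using x ab by simp
  qed
qed

lemma sum_ord_prod:
  assumes G: "group G" and H: "group H" and cop: "coprime (order G) (order H)"
    and A: "A \<subseteq> carrier G" and B: "B \<subseteq> carrier H"
  shows "(\<Sum>x\<in>A \<times> B. group.ord (G \<times>\<times> H) x) = (\<Sum>a\<in>A. group.ord G a) * (\<Sum>b\<in>B. group.ord H b)"
proof -
  have "(\<Sum>x\<in>A \<times> B. group.ord (G \<times>\<times> H) x) = (\<Sum>(a,b)\<in>A \<times> B. group.ord G a * group.ord H b)"
  proof (rule sum.cong)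
    fix x assume "x \<in> A \<times> B"
    then obtain a b where x: "x = (a,b)" "a \<in> carrier G" "b \<in> carrier H" using A B by auto
    have "coprime (group.ord G a) (group.ord H b)"
      using coprime_divisors[OF group.ord_dvd_group_order[OF G x(2)] group.ord_dvd_group_order[OF H x(3)] cop] .
    then show "group.ord (G \<times>\<times> H) x = (case x of (a, b) \<Rightarrow> group.ord G a * group.ord H b)"
      using ord_DirProd[OF G H x(2) x(3)] x(1) by simp
  qed simp
  also have "\<dots> = (\<Sum>a\<in>A. \<Sum>b\<in>B. group.ord G a * group.ord H b)"
    by (simp add: sum.cartesian_product)
  also have "\<dots> = (\<Sum>a\<in>A. group.ord G a) * (\<Sum>b\<in>B. group.ord H b)"
    by (simp add: sum_product)
  finally show ?thesis .
qed

lemma sum_ord_simple_dvd: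
  assumes S: "simple_group S" and A: "A \<lhd> S"
  shows "(\<Sum>a\<in>A. group.ord S a) dvd psi S"
proof -
  have G: "group S" using S by (simp add: simple_group_def)
  have "A = carrier S \<or> A = {\<one>\<^bsub>S\<^esub>}" using simple_group.no_real_normal_subgroup[OF S A] .
  then show ?thesis
  proof
    assume "A = carrier S" then show ?thesis by (simp add: psi_def)
  next
    assume "A = {\<one>\<^bsub>S\<^esub>}" then show ?thesis using group.ord_id[OF G] by simp
  qed
qed

lemma part1:
  fixes S :: "('a, 'b) monoid_scheme" and p :: nat
  assumes SS: "simple_group S" and fS: "finite (carrier S)" and p: "Factorial_Ring.prime p"
    and cop: "coprime (order S) p"
  shows "psi_normal_divisible (S \<times>\<times> integer_mod_group p)"
proof -
  have gS: "group S" using SS by (simp add: simple_group_def)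
  have gZ: "group (integer_mod_group p)" by simp
  have p0: "p \<noteq> 0" using p by auto
  have cZ: "carrier (integer_mod_group p) = {0..<int p}" using p0 by (simp add: carrier_integer_mod_group)
  have oZ: "order (integer_mod_group p) = p" by (simp add: order_def cZ)
  have fZ: "finite (carrier (integer_mod_group p))" by (simp add: cZ)
  have SZ: "simple_group (integer_mod_group p)"
    using group.prime_order_simple[OF gZ] p oZ by simp
  have cop': "coprime (order S) (order (integer_mod_group p))" using cop oZ by simp
  have gG: "group (S \<times>\<times> integer_mod_group p)" using DirProd_group[OF gS gZ] .
  have psiG: "psi (S \<times>\<times> integer_mod_group p) = psi S * psi (integer_mod_group p)"
    unfolding psi_def carrier_DirProd using sum_ord_prod[OF gS gZ cop' subset_refl subset_refl] .
  show ?thesis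
    unfolding psi_normal_divisible_def
  proof (intro allI impI)
    fix N assume N: "N \<lhd> S \<times>\<times> integer_mod_group p"
    have sub: "subgroup N (S \<times>\<times> integer_mod_group p)" using N by (simp add: normal_def)
    define A where "A = {a \<in> carrier S. (a, \<one>\<^bsub>integer_mod_group p\<^esub>) \<in> N}"
    define B where "B = {b \<in> carrier (integer_mod_group p). (\<one>\<^bsub>S\<^esub>, b) \<in> N}"
    have NAB: "N = A \<times> B" unfolding A_def B_def by (rule normal_split[OF gS gZ fS fZ cop' N])
    have An: "A \<lhd> S" unfolding A_def by (rule normal_fst[OF gS gZ N])
    have Bn: "B \<lhd> integer_mod_group p" unfolding B_def by (rule normal_snd[OF gS gZ N])
    have "psi ((S \<times>\<times> integer_mod_group p)\<lparr>carrier := N\<rparr>) = (\<Sum>x\<in>N. group.ord (S \<times>\<times> integer_mod_group p) x)"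
      by (rule psi_sub[OF gG sub])
    also have "\<dots> = (\<Sum>a\<in>A. group.ord S a) * (\<Sum>b\<in>B. group.ord (integer_mod_group p) b)"
      unfolding NAB by (rule sum_ord_prod[OF gS gZ cop']) (auto simp: A_def B_def)
    also have "\<dots> dvd psi S * psi (integer_mod_group p)"
      by (rule mult_dvd_mono[OF sum_ord_simple_dvd[OF SS An] sum_ord_simple_dvd[OF SZ Bn]])
    finally show "psi ((S \<times>\<times> integer_mod_group p)\<lparr>carrier := N\<rparr>) dvd psi (S \<times>\<times> integer_mod_group p)"
      using psiG by simp
  qed
qed




definition pf :: "nat list \<Rightarrow> nat \<Rightarrow> nat" where
  "pf l i = (case l of [a,b,c,d,e] \<Rightarrow>
     (if i = 1 then a else if i = 2 then b else if i = 3 then c else if i = 4 then d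
      else if i = 5 then e else i) | _ \<Rightarrow> i)"

lemma pf5[simp]: "pf [a,b,c,d,e] i = (if i = 1 then a else if i = 2 then b else if i = 3 then c else if i = 4 then d
      else if i = 5 then e else i)"
  by (simp add: pf_def)

definition lc :: "nat list \<Rightarrow> nat list \<Rightarrow> nat list" where
  "lc x y = [pf x (pf y 1), pf x (pf y 2), pf x (pf y 3), pf x (pf y 4), pf x (pf y 5)]"

lemma pf_out: "i \<notin> {1..5} \<Longrightarrow> pf l i = i"
  unfolding pf_def by (auto split: list.split)

lemma pf_lc: "pf (lc x y) = pf x \<circ> pf y"
proof
  fix i
  show "pf (lc x y) i = (pf x \<circ> pf y) i"
  proof (cases "i \<in> {1..5}")
    case True
    then have "i = 1 \<or> i = 2 \<or> i = 3 \<or> i = 4 \<or> i = 5" by auto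
    then show ?thesis by (auto simp: lc_def)
  next
    case False
    then show ?thesis by (simp add: pf_out)
  qed
qed

lemma pf_id: "pf [1,2,3,4,5] = id"
proof
  fix i show "pf [1,2,3,4,5] i = id i" by simp
qed

lemma perm_pf:
  assumes "f permutes {1..5}"
  shows "pf [f 1, f 2, f 3, f 4, f 5] = f"
proof
  fix i
  show "pf [f 1, f 2, f 3, f 4, f 5] i = f i"
  proof (cases "i \<in> {1..5}")
    case True
    then have "i = 1 \<or> i = 2 \<or> i = 3 \<or> i = 4 \<or> i = 5" by auto
    then show ?thesis by auto
  next
    case False
    then show ?thesis using assms pf_out[OF False, of "[f 1, f 2, f 3, f 4, f 5]"] by (simp add: permutes_not_in)
  qed
qed

lemma cyc_carrier:
  assumes "distinct [a,b,c]" "{a,b,c} \<subseteq> {1..5}"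
    "[cycle_of_list [a,b,c] 1, cycle_of_list [a,b,c] 2, cycle_of_list [a,b,c] 3,
      cycle_of_list [a,b,c] 4, cycle_of_list [a,b,c] 5] = l"
  shows "pf l \<in> carrier (alt_group 5)" "pf l = cycle_of_list [a,b,c]"
proof -
  have per: "cycle_of_list [a,b,c] permutes {1..5}"
    using cycle_permutes[of "[a,b,c]"] assms(2) permutes_subset by fastforce
  have eq: "pf l = cycle_of_list [a,b,c]" using perm_pf[OF per] assms(3) by simp
  have "cycle_of_list [a,b,c] \<in> three_cycles 5"
    using assms by (auto intro!: exI[of _ "[a,b,c]"])
  then show "pf l \<in> carrier (alt_group 5)" using three_cycles_incl eq by auto
  show "pf l = cycle_of_list [a,b,c]" by (rule eq)
qed

definition gen :: "nat list \<Rightarrow> nat list \<Rightarrow> bool" where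
  "gen g gi \<longleftrightarrow> pf g \<in> carrier (alt_group 5) \<and> pf gi \<in> carrier (alt_group 5) \<and> lc gi g = [1,2,3,4,5]"

lemma genI: "pf g \<in> carrier (alt_group 5) \<Longrightarrow> pf gi \<in> carrier (alt_group 5) \<Longrightarrow> lc gi g = [1,2,3,4,5] \<Longrightarrow> gen g gi"
  by (simp add: gen_def)

lemma conjS:
  assumes N: "N \<lhd> alt_group 5" and g: "gen g gi" and m: "pf m \<in> N" and r: "lc (lc g m) gi = r"
  shows "pf r \<in> N"
proof -
  interpret A: group "alt_group 5" by (rule alt_group_is_group)
  have "inv\<^bsub>alt_group 5\<^esub> (pf g) = pf gi"
    using g unfolding gen_def
    by (intro A.inv_equality) (auto simp: alt_group_mult alt_group_one pf_id simp flip: pf_lc)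
  moreover have "pf g \<otimes>\<^bsub>alt_group 5\<^esub> pf m \<otimes>\<^bsub>alt_group 5\<^esub> inv\<^bsub>alt_group 5\<^esub> (pf g) \<in> N"
    using normal.inv_op_closed2[OF N] g m unfolding gen_def by blast
  ultimately show ?thesis unfolding r[symmetric] pf_lc by (simp add: alt_group_mult)
qed

lemma prodS:
  assumes N: "N \<lhd> alt_group 5" and m: "pf m \<in> N" and m': "pf m' \<in> N" and r: "lc m m' = r"
  shows "pf r \<in> N"
proof -
  have "pf m \<otimes>\<^bsub>alt_group 5\<^esub> pf m' \<in> N"
    using N m m' by (simp add: normal_def subgroup.m_closed)
  then show ?thesis unfolding r[symmetric] pf_lc by (simp add: alt_group_mult)
qed

lemma g123: "gen [2,3,1,4,5] [3,1,2,4,5]"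
proof (rule genI)
  show "pf [2,3,1,4,5] \<in> carrier (alt_group 5)"
    by (rule cyc_carrier(1)[of 1 2 3]) (auto simp: transpose_def)
  show "pf [3,1,2,4,5] \<in> carrier (alt_group 5)"
    by (rule cyc_carrier(1)[of 3 2 1]) (auto simp: transpose_def)
  show "lc [3,1,2,4,5] [2,3,1,4,5] = [1,2,3,4,5]" by (simp add: lc_def)
qed

lemma gen_23145: "gen [2,3,1,4,5] [3,1,2,4,5]"
proof (rule genI)
  show "pf [2,3,1,4,5] \<in> carrier (alt_group 5)"
    by (rule cyc_carrier(1)[of 1 2 3]) (auto simp: transpose_def)
  show "pf [3,1,2,4,5] \<in> carrier (alt_group 5)"
    by (rule cyc_carrier(1)[of 1 3 2]) (auto simp: transpose_def)
  show "lc [3,1,2,4,5] [2,3,1,4,5] = [1,2,3,4,5]" by (simp add: lc_def)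
qed

lemma gen_24315: "gen [2,4,3,1,5] [4,1,3,2,5]"
proof (rule genI)
  show "pf [2,4,3,1,5] \<in> carrier (alt_group 5)"
    by (rule cyc_carrier(1)[of 1 2 4]) (auto simp: transpose_def)
  show "pf [4,1,3,2,5] \<in> carrier (alt_group 5)"
    by (rule cyc_carrier(1)[of 1 4 2]) (auto simp: transpose_def)
  show "lc [4,1,3,2,5] [2,4,3,1,5] = [1,2,3,4,5]" by (simp add: lc_def)
qed

lemma gen_25341: "gen [2,5,3,4,1] [5,1,3,4,2]"
proof (rule genI)
  show "pf [2,5,3,4,1] \<in> carrier (alt_group 5)"
    by (rule cyc_carrier(1)[of 1 2 5]) (auto simp: transpose_def)
  show "pf [5,1,3,4,2] \<in> carrier (alt_group 5)"
    by (rule cyc_carrier(1)[of 1 5 2]) (auto simp: transpose_def)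
  show "lc [5,1,3,4,2] [2,5,3,4,1] = [1,2,3,4,5]" by (simp add: lc_def)
qed

lemma gen_31245: "gen [3,1,2,4,5] [2,3,1,4,5]"
proof (rule genI)
  show "pf [3,1,2,4,5] \<in> carrier (alt_group 5)"
    by (rule cyc_carrier(1)[of 1 3 2]) (auto simp: transpose_def)
  show "pf [2,3,1,4,5] \<in> carrier (alt_group 5)"
    by (rule cyc_carrier(1)[of 1 2 3]) (auto simp: transpose_def)
  show "lc [2,3,1,4,5] [3,1,2,4,5] = [1,2,3,4,5]" by (simp add: lc_def)
qed

lemma gen_32415: "gen [3,2,4,1,5] [4,2,1,3,5]"
proof (rule genI)
  show "pf [3,2,4,1,5] \<in> carrier (alt_group 5)"
    by (rule cyc_carrier(1)[of 1 3 4]) (auto simp: transpose_def)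
  show "pf [4,2,1,3,5] \<in> carrier (alt_group 5)"
    by (rule cyc_carrier(1)[of 1 4 3]) (auto simp: transpose_def)
  show "lc [4,2,1,3,5] [3,2,4,1,5] = [1,2,3,4,5]" by (simp add: lc_def)
qed

lemma gen_32541: "gen [3,2,5,4,1] [5,2,1,4,3]"
proof (rule genI)
  show "pf [3,2,5,4,1] \<in> carrier (alt_group 5)"
    by (rule cyc_carrier(1)[of 1 3 5]) (auto simp: transpose_def)
  show "pf [5,2,1,4,3] \<in> carrier (alt_group 5)"
    by (rule cyc_carrier(1)[of 1 5 3]) (auto simp: transpose_def)
  show "lc [5,2,1,4,3] [3,2,5,4,1] = [1,2,3,4,5]" by (simp add: lc_def)
qed

lemma gen_41325: "gen [4,1,3,2,5] [2,4,3,1,5]"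
proof (rule genI)
  show "pf [4,1,3,2,5] \<in> carrier (alt_group 5)"
    by (rule cyc_carrier(1)[of 1 4 2]) (auto simp: transpose_def)
  show "pf [2,4,3,1,5] \<in> carrier (alt_group 5)"
    by (rule cyc_carrier(1)[of 1 2 4]) (auto simp: transpose_def)
  show "lc [2,4,3,1,5] [4,1,3,2,5] = [1,2,3,4,5]" by (simp add: lc_def)
qed

lemma gen_42135: "gen [4,2,1,3,5] [3,2,4,1,5]"
proof (rule genI)
  show "pf [4,2,1,3,5] \<in> carrier (alt_group 5)"
    by (rule cyc_carrier(1)[of 1 4 3]) (auto simp: transpose_def)
  show "pf [3,2,4,1,5] \<in> carrier (alt_group 5)"
    by (rule cyc_carrier(1)[of 1 3 4]) (auto simp: transpose_def)
  show "lc [3,2,4,1,5] [4,2,1,3,5] = [1,2,3,4,5]" by (simp add: lc_def)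
qed

lemma gen_42351: "gen [4,2,3,5,1] [5,2,3,1,4]"
proof (rule genI)
  show "pf [4,2,3,5,1] \<in> carrier (alt_group 5)"
    by (rule cyc_carrier(1)[of 1 4 5]) (auto simp: transpose_def)
  show "pf [5,2,3,1,4] \<in> carrier (alt_group 5)"
    by (rule cyc_carrier(1)[of 1 5 4]) (auto simp: transpose_def)
  show "lc [5,2,3,1,4] [4,2,3,5,1] = [1,2,3,4,5]" by (simp add: lc_def)
qed

lemma gen_51342: "gen [5,1,3,4,2] [2,5,3,4,1]"
proof (rule genI)
  show "pf [5,1,3,4,2] \<in> carrier (alt_group 5)"
    by (rule cyc_carrier(1)[of 1 5 2]) (auto simp: transpose_def)
  show "pf [2,5,3,4,1] \<in> carrier (alt_group 5)"
    by (rule cyc_carrier(1)[of 1 2 5]) (auto simp: transpose_def)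
  show "lc [2,5,3,4,1] [5,1,3,4,2] = [1,2,3,4,5]" by (simp add: lc_def)
qed

lemma gen_52143: "gen [5,2,1,4,3] [3,2,5,4,1]"
proof (rule genI)
  show "pf [5,2,1,4,3] \<in> carrier (alt_group 5)"
    by (rule cyc_carrier(1)[of 1 5 3]) (auto simp: transpose_def)
  show "pf [3,2,5,4,1] \<in> carrier (alt_group 5)"
    by (rule cyc_carrier(1)[of 1 3 5]) (auto simp: transpose_def)
  show "lc [3,2,5,4,1] [5,2,1,4,3] = [1,2,3,4,5]" by (simp add: lc_def)
qed

lemma gen_52314: "gen [5,2,3,1,4] [4,2,3,5,1]"
proof (rule genI)
  show "pf [5,2,3,1,4] \<in> carrier (alt_group 5)"
    by (rule cyc_carrier(1)[of 1 5 4]) (auto simp: transpose_def)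
  show "pf [4,2,3,5,1] \<in> carrier (alt_group 5)"
    by (rule cyc_carrier(1)[of 1 4 5]) (auto simp: transpose_def)
  show "lc [4,2,3,5,1] [5,2,3,1,4] = [1,2,3,4,5]" by (simp add: lc_def)
qed

lemma gen_13425: "gen [1,3,4,2,5] [1,4,2,3,5]"
proof (rule genI)
  show "pf [1,3,4,2,5] \<in> carrier (alt_group 5)"
    by (rule cyc_carrier(1)[of 2 3 4]) (auto simp: transpose_def)
  show "pf [1,4,2,3,5] \<in> carrier (alt_group 5)"
    by (rule cyc_carrier(1)[of 2 4 3]) (auto simp: transpose_def)
  show "lc [1,4,2,3,5] [1,3,4,2,5] = [1,2,3,4,5]" by (simp add: lc_def)
qed

lemma gen_13542: "gen [1,3,5,4,2] [1,5,2,4,3]"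
proof (rule genI)
  show "pf [1,3,5,4,2] \<in> carrier (alt_group 5)"
    by (rule cyc_carrier(1)[of 2 3 5]) (auto simp: transpose_def)
  show "pf [1,5,2,4,3] \<in> carrier (alt_group 5)"
    by (rule cyc_carrier(1)[of 2 5 3]) (auto simp: transpose_def)
  show "lc [1,5,2,4,3] [1,3,5,4,2] = [1,2,3,4,5]" by (simp add: lc_def)
qed

lemma gen_14235: "gen [1,4,2,3,5] [1,3,4,2,5]"
proof (rule genI)
  show "pf [1,4,2,3,5] \<in> carrier (alt_group 5)"
    by (rule cyc_carrier(1)[of 2 4 3]) (auto simp: transpose_def)
  show "pf [1,3,4,2,5] \<in> carrier (alt_group 5)"
    by (rule cyc_carrier(1)[of 2 3 4]) (auto simp: transpose_def)
  show "lc [1,3,4,2,5] [1,4,2,3,5] = [1,2,3,4,5]" by (simp add: lc_def)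
qed

lemma gen_14352: "gen [1,4,3,5,2] [1,5,3,2,4]"
proof (rule genI)
  show "pf [1,4,3,5,2] \<in> carrier (alt_group 5)"
    by (rule cyc_carrier(1)[of 2 4 5]) (auto simp: transpose_def)
  show "pf [1,5,3,2,4] \<in> carrier (alt_group 5)"
    by (rule cyc_carrier(1)[of 2 5 4]) (auto simp: transpose_def)
  show "lc [1,5,3,2,4] [1,4,3,5,2] = [1,2,3,4,5]" by (simp add: lc_def)
qed

lemma gen_15243: "gen [1,5,2,4,3] [1,3,5,4,2]"
proof (rule genI)
  show "pf [1,5,2,4,3] \<in> carrier (alt_group 5)"
    by (rule cyc_carrier(1)[of 2 5 3]) (auto simp: transpose_def)
  show "pf [1,3,5,4,2] \<in> carrier (alt_group 5)"
    by (rule cyc_carrier(1)[of 2 3 5]) (auto simp: transpose_def)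
  show "lc [1,3,5,4,2] [1,5,2,4,3] = [1,2,3,4,5]" by (simp add: lc_def)
qed

lemma gen_15324: "gen [1,5,3,2,4] [1,4,3,5,2]"
proof (rule genI)
  show "pf [1,5,3,2,4] \<in> carrier (alt_group 5)"
    by (rule cyc_carrier(1)[of 2 5 4]) (auto simp: transpose_def)
  show "pf [1,4,3,5,2] \<in> carrier (alt_group 5)"
    by (rule cyc_carrier(1)[of 2 4 5]) (auto simp: transpose_def)
  show "lc [1,4,3,5,2] [1,5,3,2,4] = [1,2,3,4,5]" by (simp add: lc_def)
qed

lemma gen_12453: "gen [1,2,4,5,3] [1,2,5,3,4]"
proof (rule genI)
  show "pf [1,2,4,5,3] \<in> carrier (alt_group 5)"
    by (rule cyc_carrier(1)[of 3 4 5]) (auto simp: transpose_def)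
  show "pf [1,2,5,3,4] \<in> carrier (alt_group 5)"
    by (rule cyc_carrier(1)[of 3 5 4]) (auto simp: transpose_def)
  show "lc [1,2,5,3,4] [1,2,4,5,3] = [1,2,3,4,5]" by (simp add: lc_def)
qed

lemma gen_12534: "gen [1,2,5,3,4] [1,2,4,5,3]"
proof (rule genI)
  show "pf [1,2,5,3,4] \<in> carrier (alt_group 5)"
    by (rule cyc_carrier(1)[of 3 5 4]) (auto simp: transpose_def)
  show "pf [1,2,4,5,3] \<in> carrier (alt_group 5)"
    by (rule cyc_carrier(1)[of 3 4 5]) (auto simp: transpose_def)
  show "lc [1,2,4,5,3] [1,2,5,3,4] = [1,2,3,4,5]" by (simp add: lc_def)
qed

context
  fixes N assumes N: "N \<lhd> alt_group 5"
begin

lemma gd_23145: "pf [2,3,1,4,5] \<in> N \<Longrightarrow> pf [2,3,1,4,5] \<in> N" .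

lemma gd_32415: "pf [3,2,4,1,5] \<in> N \<Longrightarrow> pf [2,3,1,4,5] \<in> N"
  by (rule gd_23145, rule conjS[OF N gen_24315], assumption, simp add: lc_def)

lemma gd_32541: "pf [3,2,5,4,1] \<in> N \<Longrightarrow> pf [2,3,1,4,5] \<in> N"
  by (rule gd_23145, rule conjS[OF N gen_25341], assumption, simp add: lc_def)

lemma gd_41325: "pf [4,1,3,2,5] \<in> N \<Longrightarrow> pf [2,3,1,4,5] \<in> N"
  by (rule gd_23145, rule conjS[OF N gen_32415], assumption, simp add: lc_def)

lemma gd_51342: "pf [5,1,3,4,2] \<in> N \<Longrightarrow> pf [2,3,1,4,5] \<in> N"
  by (rule gd_23145, rule conjS[OF N gen_32541], assumption, simp add: lc_def)

lemma gd_14235: "pf [1,4,2,3,5] \<in> N \<Longrightarrow> pf [2,3,1,4,5] \<in> N"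
  by (rule gd_23145, rule conjS[OF N gen_41325], assumption, simp add: lc_def)

lemma gd_13542: "pf [1,3,5,4,2] \<in> N \<Longrightarrow> pf [2,3,1,4,5] \<in> N"
  by (rule gd_23145, rule conjS[OF N gen_42351], assumption, simp add: lc_def)

lemma gd_15243: "pf [1,5,2,4,3] \<in> N \<Longrightarrow> pf [2,3,1,4,5] \<in> N"
  by (rule gd_23145, rule conjS[OF N gen_51342], assumption, simp add: lc_def)

lemma gd_13425: "pf [1,3,4,2,5] \<in> N \<Longrightarrow> pf [2,3,1,4,5] \<in> N"
  by (rule gd_23145, rule conjS[OF N gen_52314], assumption, simp add: lc_def)

lemma gd_52143: "pf [5,2,1,4,3] \<in> N \<Longrightarrow> pf [2,3,1,4,5] \<in> N"
  by (rule gd_23145, rule conjS[OF N gen_14352], assumption, simp add: lc_def)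

lemma gd_42135: "pf [4,2,1,3,5] \<in> N \<Longrightarrow> pf [2,3,1,4,5] \<in> N"
  by (rule gd_23145, rule conjS[OF N gen_15324], assumption, simp add: lc_def)

lemma gd_25341: "pf [2,5,3,4,1] \<in> N \<Longrightarrow> pf [2,3,1,4,5] \<in> N"
  by (rule gd_23145, rule conjS[OF N gen_12453], assumption, simp add: lc_def)

lemma gd_24315: "pf [2,4,3,1,5] \<in> N \<Longrightarrow> pf [2,3,1,4,5] \<in> N"
  by (rule gd_23145, rule conjS[OF N gen_12534], assumption, simp add: lc_def)

lemma gd_12453: "pf [1,2,4,5,3] \<in> N \<Longrightarrow> pf [2,3,1,4,5] \<in> N"
  by (rule gd_32415, rule conjS[OF N gen_25341], assumption, simp add: lc_def)

lemma gd_42351: "pf [4,2,3,5,1] \<in> N \<Longrightarrow> pf [2,3,1,4,5] \<in> N"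
  by (rule gd_32415, rule conjS[OF N gen_32541], assumption, simp add: lc_def)

lemma gd_12534: "pf [1,2,5,3,4] \<in> N \<Longrightarrow> pf [2,3,1,4,5] \<in> N"
  by (rule gd_32415, rule conjS[OF N gen_52143], assumption, simp add: lc_def)

lemma gd_31245: "pf [3,1,2,4,5] \<in> N \<Longrightarrow> pf [2,3,1,4,5] \<in> N"
  by (rule gd_32415, rule conjS[OF N gen_14352], assumption, simp add: lc_def)

lemma gd_52314: "pf [5,2,3,1,4] \<in> N \<Longrightarrow> pf [2,3,1,4,5] \<in> N"
  by (rule gd_32415, rule conjS[OF N gen_15243], assumption, simp add: lc_def)

lemma gd_15324: "pf [1,5,3,2,4] \<in> N \<Longrightarrow> pf [2,3,1,4,5] \<in> N"
  by (rule gd_41325, rule conjS[OF N gen_32541], assumption, simp add: lc_def)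

lemma gd_14352: "pf [1,4,3,5,2] \<in> N \<Longrightarrow> pf [2,3,1,4,5] \<in> N"
  by (rule gd_41325, rule conjS[OF N gen_51342], assumption, simp add: lc_def)

lemma gd_12354: "pf [1,2,3,5,4] \<in> N \<Longrightarrow> pf [2,3,1,4,5] \<in> N"
proof -
  assume d12354: "pf [1,2,3,5,4] \<in> N"
  have d52341: "pf [5,2,3,4,1] \<in> N" by (rule conjS[OF N gen_24315 d12354]) (simp add: lc_def)
  have d42351: "pf [4,2,3,5,1] \<in> N" by (rule prodS[OF N d12354 d52341]) (simp add: lc_def)
  show ?thesis by (rule gd_42351[OF d42351])
qed

lemma gd_15342: "pf [1,5,3,4,2] \<in> N \<Longrightarrow> pf [2,3,1,4,5] \<in> N"
  by (rule gd_12354, rule conjS[OF N gen_24315], assumption, simp add: lc_def)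

lemma gd_14325: "pf [1,4,3,2,5] \<in> N \<Longrightarrow> pf [2,3,1,4,5] \<in> N"
  by (rule gd_12354, rule conjS[OF N gen_25341], assumption, simp add: lc_def)

lemma gd_12543: "pf [1,2,5,4,3] \<in> N \<Longrightarrow> pf [2,3,1,4,5] \<in> N"
  by (rule gd_12354, rule conjS[OF N gen_32415], assumption, simp add: lc_def)

lemma gd_12435: "pf [1,2,4,3,5] \<in> N \<Longrightarrow> pf [2,3,1,4,5] \<in> N"
  by (rule gd_12354, rule conjS[OF N gen_32541], assumption, simp add: lc_def)

lemma gd_52341: "pf [5,2,3,4,1] \<in> N \<Longrightarrow> pf [2,3,1,4,5] \<in> N"
  by (rule gd_12354, rule conjS[OF N gen_41325], assumption, simp add: lc_def)

lemma gd_42315: "pf [4,2,3,1,5] \<in> N \<Longrightarrow> pf [2,3,1,4,5] \<in> N"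
  by (rule gd_12354, rule conjS[OF N gen_42351], assumption, simp add: lc_def)

lemma gd_21345: "pf [2,1,3,4,5] \<in> N \<Longrightarrow> pf [2,3,1,4,5] \<in> N"
  by (rule gd_15342, rule conjS[OF N gen_25341], assumption, simp add: lc_def)

lemma gd_13245: "pf [1,3,2,4,5] \<in> N \<Longrightarrow> pf [2,3,1,4,5] \<in> N"
  by (rule gd_15342, rule conjS[OF N gen_32541], assumption, simp add: lc_def)

lemma gd_32145: "pf [3,2,1,4,5] \<in> N \<Longrightarrow> pf [2,3,1,4,5] \<in> N"
  by (rule gd_12543, rule conjS[OF N gen_32541], assumption, simp add: lc_def)

lemma gd_13254: "pf [1,3,2,5,4] \<in> N \<Longrightarrow> pf [2,3,1,4,5] \<in> N"
proof -
  assume d13254: "pf [1,3,2,5,4] \<in> N"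
  have d32154: "pf [3,2,1,5,4] \<in> N" by (rule conjS[OF N gen_23145 d13254]) (simp add: lc_def)
  have d23145: "pf [2,3,1,4,5] \<in> N" by (rule prodS[OF N d13254 d32154]) (simp add: lc_def)
  show ?thesis by (rule gd_23145[OF d23145])
qed

lemma gd_21354: "pf [2,1,3,5,4] \<in> N \<Longrightarrow> pf [2,3,1,4,5] \<in> N"
  by (rule gd_13254, rule conjS[OF N gen_23145], assumption, simp add: lc_def)

lemma gd_35142: "pf [3,5,1,4,2] \<in> N \<Longrightarrow> pf [2,3,1,4,5] \<in> N"
  by (rule gd_13254, rule conjS[OF N gen_24315], assumption, simp add: lc_def)

lemma gd_34125: "pf [3,4,1,2,5] \<in> N \<Longrightarrow> pf [2,3,1,4,5] \<in> N"
  by (rule gd_13254, rule conjS[OF N gen_25341], assumption, simp add: lc_def)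

lemma gd_32154: "pf [3,2,1,5,4] \<in> N \<Longrightarrow> pf [2,3,1,4,5] \<in> N"
  by (rule gd_13254, rule conjS[OF N gen_31245], assumption, simp add: lc_def)

lemma gd_21543: "pf [2,1,5,4,3] \<in> N \<Longrightarrow> pf [2,3,1,4,5] \<in> N"
  by (rule gd_13254, rule conjS[OF N gen_32415], assumption, simp add: lc_def)

lemma gd_21435: "pf [2,1,4,3,5] \<in> N \<Longrightarrow> pf [2,3,1,4,5] \<in> N"
  by (rule gd_13254, rule conjS[OF N gen_32541], assumption, simp add: lc_def)

lemma gd_52431: "pf [5,2,4,3,1] \<in> N \<Longrightarrow> pf [2,3,1,4,5] \<in> N"
  by (rule gd_13254, rule conjS[OF N gen_41325], assumption, simp add: lc_def)

lemma gd_54321: "pf [5,4,3,2,1] \<in> N \<Longrightarrow> pf [2,3,1,4,5] \<in> N"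
  by (rule gd_13254, rule conjS[OF N gen_42135], assumption, simp add: lc_def)

lemma gd_43215: "pf [4,3,2,1,5] \<in> N \<Longrightarrow> pf [2,3,1,4,5] \<in> N"
  by (rule gd_13254, rule conjS[OF N gen_42351], assumption, simp add: lc_def)

lemma gd_42513: "pf [4,2,5,1,3] \<in> N \<Longrightarrow> pf [2,3,1,4,5] \<in> N"
  by (rule gd_13254, rule conjS[OF N gen_51342], assumption, simp add: lc_def)

lemma gd_45312: "pf [4,5,3,1,2] \<in> N \<Longrightarrow> pf [2,3,1,4,5] \<in> N"
  by (rule gd_13254, rule conjS[OF N gen_52143], assumption, simp add: lc_def)

lemma gd_53241: "pf [5,3,2,4,1] \<in> N \<Longrightarrow> pf [2,3,1,4,5] \<in> N"
  by (rule gd_13254, rule conjS[OF N gen_52314], assumption, simp add: lc_def)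

lemma gd_14523: "pf [1,4,5,2,3] \<in> N \<Longrightarrow> pf [2,3,1,4,5] \<in> N"
  by (rule gd_13254, rule conjS[OF N gen_13425], assumption, simp add: lc_def)

lemma gd_15432: "pf [1,5,4,3,2] \<in> N \<Longrightarrow> pf [2,3,1,4,5] \<in> N"
  by (rule gd_13254, rule conjS[OF N gen_13542], assumption, simp add: lc_def)

lemma gd_13452: "pf [1,3,4,5,2] \<in> N \<Longrightarrow> pf [2,3,1,4,5] \<in> N"
proof -
  assume d13452: "pf [1,3,4,5,2] \<in> N"
  have d52134: "pf [5,2,1,3,4] \<in> N" by (rule conjS[OF N gen_24315 d13452]) (simp add: lc_def)
  have d23145: "pf [2,3,1,4,5] \<in> N" by (rule prodS[OF N d13452 d52134]) (simp add: lc_def)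
  show ?thesis by (rule gd_23145[OF d23145])
qed

lemma gd_24351: "pf [2,4,3,5,1] \<in> N \<Longrightarrow> pf [2,3,1,4,5] \<in> N"
  by (rule gd_13452, rule conjS[OF N gen_23145], assumption, simp add: lc_def)

lemma gd_35241: "pf [3,5,2,4,1] \<in> N \<Longrightarrow> pf [2,3,1,4,5] \<in> N"
  by (rule gd_13452, rule conjS[OF N gen_24315], assumption, simp add: lc_def)

lemma gd_31425: "pf [3,1,4,2,5] \<in> N \<Longrightarrow> pf [2,3,1,4,5] \<in> N"
  by (rule gd_13452, rule conjS[OF N gen_25341], assumption, simp add: lc_def)

lemma gd_42153: "pf [4,2,1,5,3] \<in> N \<Longrightarrow> pf [2,3,1,4,5] \<in> N"
  by (rule gd_13452, rule conjS[OF N gen_31245], assumption, simp add: lc_def)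

lemma gd_31542: "pf [3,1,5,4,2] \<in> N \<Longrightarrow> pf [2,3,1,4,5] \<in> N"
  by (rule gd_13452, rule conjS[OF N gen_32415], assumption, simp add: lc_def)

lemma gd_41235: "pf [4,1,2,3,5] \<in> N \<Longrightarrow> pf [2,3,1,4,5] \<in> N"
  by (rule gd_13452, rule conjS[OF N gen_32541], assumption, simp add: lc_def)

lemma gd_52134: "pf [5,2,1,3,4] \<in> N \<Longrightarrow> pf [2,3,1,4,5] \<in> N"
  by (rule gd_13452, rule conjS[OF N gen_41325], assumption, simp add: lc_def)

lemma gd_54312: "pf [5,4,3,1,2] \<in> N \<Longrightarrow> pf [2,3,1,4,5] \<in> N"
  by (rule gd_13452, rule conjS[OF N gen_42135], assumption, simp add: lc_def)

lemma gd_43125: "pf [4,3,1,2,5] \<in> N \<Longrightarrow> pf [2,3,1,4,5] \<in> N"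
  by (rule gd_13452, rule conjS[OF N gen_42351], assumption, simp add: lc_def)

lemma gd_52413: "pf [5,2,4,1,3] \<in> N \<Longrightarrow> pf [2,3,1,4,5] \<in> N"
  by (rule gd_13452, rule conjS[OF N gen_51342], assumption, simp add: lc_def)

lemma gd_25314: "pf [2,5,3,1,4] \<in> N \<Longrightarrow> pf [2,3,1,4,5] \<in> N"
  by (rule gd_13452, rule conjS[OF N gen_52143], assumption, simp add: lc_def)

lemma gd_23541: "pf [2,3,5,4,1] \<in> N \<Longrightarrow> pf [2,3,1,4,5] \<in> N"
  by (rule gd_13452, rule conjS[OF N gen_52314], assumption, simp add: lc_def)

lemma gd_13524: "pf [1,3,5,2,4] \<in> N \<Longrightarrow> pf [2,3,1,4,5] \<in> N"
  by (rule gd_13452, rule conjS[OF N gen_13425], assumption, simp add: lc_def)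

lemma gd_14532: "pf [1,4,5,3,2] \<in> N \<Longrightarrow> pf [2,3,1,4,5] \<in> N"
  by (rule gd_13452, rule conjS[OF N gen_13542], assumption, simp add: lc_def)

lemma gd_15423: "pf [1,5,4,2,3] \<in> N \<Longrightarrow> pf [2,3,1,4,5] \<in> N"
  by (rule gd_13452, rule conjS[OF N gen_14235], assumption, simp add: lc_def)

lemma gd_14253: "pf [1,4,2,5,3] \<in> N \<Longrightarrow> pf [2,3,1,4,5] \<in> N"
  by (rule gd_13452, rule conjS[OF N gen_14352], assumption, simp add: lc_def)

lemma gd_45321: "pf [4,5,3,2,1] \<in> N \<Longrightarrow> pf [2,3,1,4,5] \<in> N"
  by (rule gd_24351, rule conjS[OF N gen_25341], assumption, simp add: lc_def)

lemma gd_51243: "pf [5,1,2,4,3] \<in> N \<Longrightarrow> pf [2,3,1,4,5] \<in> N"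
  by (rule gd_24351, rule conjS[OF N gen_42135], assumption, simp add: lc_def)

lemma gd_41352: "pf [4,1,3,5,2] \<in> N \<Longrightarrow> pf [2,3,1,4,5] \<in> N"
  by (rule gd_24351, rule conjS[OF N gen_42351], assumption, simp add: lc_def)

lemma gd_34215: "pf [3,4,2,1,5] \<in> N \<Longrightarrow> pf [2,3,1,4,5] \<in> N"
  by (rule gd_24351, rule conjS[OF N gen_52143], assumption, simp add: lc_def)

lemma gd_42531: "pf [4,2,5,3,1] \<in> N \<Longrightarrow> pf [2,3,1,4,5] \<in> N"
  by (rule gd_24351, rule conjS[OF N gen_13425], assumption, simp add: lc_def)

lemma gd_23415: "pf [2,3,4,1,5] \<in> N \<Longrightarrow> pf [2,3,1,4,5] \<in> N"
  by (rule gd_24351, rule conjS[OF N gen_12453], assumption, simp add: lc_def)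

lemma gd_25143: "pf [2,5,1,4,3] \<in> N \<Longrightarrow> pf [2,3,1,4,5] \<in> N"
  by (rule gd_24351, rule conjS[OF N gen_12534], assumption, simp add: lc_def)

lemma gd_32514: "pf [3,2,5,1,4] \<in> N \<Longrightarrow> pf [2,3,1,4,5] \<in> N"
  by (rule gd_35241, rule conjS[OF N gen_14352], assumption, simp add: lc_def)

lemma gd_32451: "pf [3,2,4,5,1] \<in> N \<Longrightarrow> pf [2,3,1,4,5] \<in> N"
  by (rule gd_42153, rule conjS[OF N gen_52314], assumption, simp add: lc_def)

lemma gd_24135: "pf [2,4,1,3,5] \<in> N \<Longrightarrow> pf [2,3,1,4,5] \<in> N"
  by (rule gd_42153, rule conjS[OF N gen_14352], assumption, simp add: lc_def)

lemma gd_53142: "pf [5,3,1,4,2] \<in> N \<Longrightarrow> pf [2,3,1,4,5] \<in> N"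
  by (rule gd_42153, rule conjS[OF N gen_15324], assumption, simp add: lc_def)

lemma gd_51324: "pf [5,1,3,2,4] \<in> N \<Longrightarrow> pf [2,3,1,4,5] \<in> N"
  by (rule gd_31542, rule conjS[OF N gen_12453], assumption, simp add: lc_def)

lemma gd_15234: "pf [1,5,2,3,4] \<in> N \<Longrightarrow> pf [2,3,1,4,5] \<in> N"
  by (rule gd_13524, rule conjS[OF N gen_15324], assumption, simp add: lc_def)

lemma gd_21453: "pf [2,1,4,5,3] \<in> N \<Longrightarrow> pf [2,3,1,4,5] \<in> N"
proof -
  assume d21453: "pf [2,1,4,5,3] \<in> N"
  have d12534: "pf [1,2,5,3,4] \<in> N" by (rule prodS[OF N d21453 d21453]) (simp add: lc_def)
  show ?thesis by (rule gd_12534[OF d12534])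
qed

lemma gd_34152: "pf [3,4,1,5,2] \<in> N \<Longrightarrow> pf [2,3,1,4,5] \<in> N"
  by (rule gd_21453, rule conjS[OF N gen_23145], assumption, simp add: lc_def)

lemma gd_45213: "pf [4,5,2,1,3] \<in> N \<Longrightarrow> pf [2,3,1,4,5] \<in> N"
  by (rule gd_21453, rule conjS[OF N gen_24315], assumption, simp add: lc_def)

lemma gd_53421: "pf [5,3,4,2,1] \<in> N \<Longrightarrow> pf [2,3,1,4,5] \<in> N"
  by (rule gd_21453, rule conjS[OF N gen_25341], assumption, simp add: lc_def)

lemma gd_43251: "pf [4,3,2,5,1] \<in> N \<Longrightarrow> pf [2,3,1,4,5] \<in> N"
  by (rule gd_21453, rule conjS[OF N gen_31245], assumption, simp add: lc_def)

lemma gd_34521: "pf [3,4,5,2,1] \<in> N \<Longrightarrow> pf [2,3,1,4,5] \<in> N"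
  by (rule gd_21453, rule conjS[OF N gen_32415], assumption, simp add: lc_def)

lemma gd_45132: "pf [4,5,1,3,2] \<in> N \<Longrightarrow> pf [2,3,1,4,5] \<in> N"
  by (rule gd_21453, rule conjS[OF N gen_32541], assumption, simp add: lc_def)

lemma gd_54123: "pf [5,4,1,2,3] \<in> N \<Longrightarrow> pf [2,3,1,4,5] \<in> N"
  by (rule gd_21453, rule conjS[OF N gen_41325], assumption, simp add: lc_def)

lemma gd_53214: "pf [5,3,2,1,4] \<in> N \<Longrightarrow> pf [2,3,1,4,5] \<in> N"
  by (rule gd_21453, rule conjS[OF N gen_42135], assumption, simp add: lc_def)

lemma gd_35412: "pf [3,5,4,1,2] \<in> N \<Longrightarrow> pf [2,3,1,4,5] \<in> N"
  by (rule gd_21453, rule conjS[OF N gen_51342], assumption, simp add: lc_def)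

lemma gd_43512: "pf [4,3,5,1,2] \<in> N \<Longrightarrow> pf [2,3,1,4,5] \<in> N"
  by (rule gd_21453, rule conjS[OF N gen_13425], assumption, simp add: lc_def)

lemma gd_54231: "pf [5,4,2,3,1] \<in> N \<Longrightarrow> pf [2,3,1,4,5] \<in> N"
  by (rule gd_21453, rule conjS[OF N gen_13542], assumption, simp add: lc_def)

lemma gd_35124: "pf [3,5,1,2,4] \<in> N \<Longrightarrow> pf [2,3,1,4,5] \<in> N"
  by (rule gd_21453, rule conjS[OF N gen_14235], assumption, simp add: lc_def)

lemma gd_25431: "pf [2,5,4,3,1] \<in> N \<Longrightarrow> pf [2,3,1,4,5] \<in> N"
  by (rule gd_34152, rule conjS[OF N gen_24315], assumption, simp add: lc_def)

lemma gd_41523: "pf [4,1,5,2,3] \<in> N \<Longrightarrow> pf [2,3,1,4,5] \<in> N"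
  by (rule gd_34152, rule conjS[OF N gen_25341], assumption, simp add: lc_def)

lemma gd_51432: "pf [5,1,4,3,2] \<in> N \<Longrightarrow> pf [2,3,1,4,5] \<in> N"
  by (rule gd_34152, rule conjS[OF N gen_42135], assumption, simp add: lc_def)

lemma gd_24513: "pf [2,4,5,1,3] \<in> N \<Longrightarrow> pf [2,3,1,4,5] \<in> N"
  by (rule gd_34152, rule conjS[OF N gen_52143], assumption, simp add: lc_def)

lemma gd_21534: "pf [2,1,5,3,4] \<in> N \<Longrightarrow> pf [2,3,1,4,5] \<in> N"
  by (rule gd_34152, rule conjS[OF N gen_13425], assumption, simp add: lc_def)

lemma gd_23154: "pf [2,3,1,5,4] \<in> N \<Longrightarrow> pf [2,3,1,4,5] \<in> N"
  by (rule gd_45213, rule conjS[OF N gen_25341], assumption, simp add: lc_def)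

lemma gd_31254: "pf [3,1,2,5,4] \<in> N \<Longrightarrow> pf [2,3,1,4,5] \<in> N"
  by (rule gd_45213, rule conjS[OF N gen_52314], assumption, simp add: lc_def)

lemma gd_23451: "pf [2,3,4,5,1] \<in> N \<Longrightarrow> pf [2,3,1,4,5] \<in> N"
proof -
  assume d23451: "pf [2,3,4,5,1] \<in> N"
  have d54132: "pf [5,4,1,3,2] \<in> N" by (rule conjS[OF N gen_24315 d23451]) (simp add: lc_def)
  have d15243: "pf [1,5,2,4,3] \<in> N" by (rule prodS[OF N d23451 d54132]) (simp add: lc_def)
  show ?thesis by (rule gd_15243[OF d15243])
qed

lemma gd_24153: "pf [2,4,1,5,3] \<in> N \<Longrightarrow> pf [2,3,1,4,5] \<in> N"
  by (rule gd_23451, rule conjS[OF N gen_23145], assumption, simp add: lc_def)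

lemma gd_35214: "pf [3,5,2,1,4] \<in> N \<Longrightarrow> pf [2,3,1,4,5] \<in> N"
  by (rule gd_23451, rule conjS[OF N gen_24315], assumption, simp add: lc_def)

lemma gd_35421: "pf [3,5,4,2,1] \<in> N \<Longrightarrow> pf [2,3,1,4,5] \<in> N"
  by (rule gd_23451, rule conjS[OF N gen_25341], assumption, simp add: lc_def)

lemma gd_43152: "pf [4,3,1,5,2] \<in> N \<Longrightarrow> pf [2,3,1,4,5] \<in> N"
  by (rule gd_23451, rule conjS[OF N gen_31245], assumption, simp add: lc_def)

lemma gd_31524: "pf [3,1,5,2,4] \<in> N \<Longrightarrow> pf [2,3,1,4,5] \<in> N"
  by (rule gd_23451, rule conjS[OF N gen_32415], assumption, simp add: lc_def)

lemma gd_41532: "pf [4,1,5,3,2] \<in> N \<Longrightarrow> pf [2,3,1,4,5] \<in> N"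
  by (rule gd_23451, rule conjS[OF N gen_32541], assumption, simp add: lc_def)

lemma gd_54132: "pf [5,4,1,3,2] \<in> N \<Longrightarrow> pf [2,3,1,4,5] \<in> N"
  by (rule gd_23451, rule conjS[OF N gen_41325], assumption, simp add: lc_def)

lemma gd_54213: "pf [5,4,2,1,3] \<in> N \<Longrightarrow> pf [2,3,1,4,5] \<in> N"
  by (rule gd_23451, rule conjS[OF N gen_42135], assumption, simp add: lc_def)

lemma gd_25413: "pf [2,5,4,1,3] \<in> N \<Longrightarrow> pf [2,3,1,4,5] \<in> N"
  by (rule gd_23451, rule conjS[OF N gen_51342], assumption, simp add: lc_def)

lemma gd_43521: "pf [4,3,5,2,1] \<in> N \<Longrightarrow> pf [2,3,1,4,5] \<in> N"
  by (rule gd_23451, rule conjS[OF N gen_52314], assumption, simp add: lc_def)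

lemma gd_51234: "pf [5,1,2,3,4] \<in> N \<Longrightarrow> pf [2,3,1,4,5] \<in> N"
  by (rule gd_24153, rule conjS[OF N gen_42135], assumption, simp add: lc_def)

lemma gd_23514: "pf [2,3,5,1,4] \<in> N \<Longrightarrow> pf [2,3,1,4,5] \<in> N"
proof -
  assume d23514: "pf [2,3,5,1,4] \<in> N"
  have d45123: "pf [4,5,1,2,3] \<in> N" by (rule conjS[OF N gen_25341 d23514]) (simp add: lc_def)
  have d14235: "pf [1,4,2,3,5] \<in> N" by (rule prodS[OF N d23514 d45123]) (simp add: lc_def)
  show ?thesis by (rule gd_14235[OF d14235])
qed

lemma gd_25134: "pf [2,5,1,3,4] \<in> N \<Longrightarrow> pf [2,3,1,4,5] \<in> N"
  by (rule gd_23514, rule conjS[OF N gen_23145], assumption, simp add: lc_def)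

lemma gd_34512: "pf [3,4,5,1,2] \<in> N \<Longrightarrow> pf [2,3,1,4,5] \<in> N"
  by (rule gd_23514, rule conjS[OF N gen_24315], assumption, simp add: lc_def)

lemma gd_34251: "pf [3,4,2,5,1] \<in> N \<Longrightarrow> pf [2,3,1,4,5] \<in> N"
  by (rule gd_23514, rule conjS[OF N gen_25341], assumption, simp add: lc_def)

lemma gd_53124: "pf [5,3,1,2,4] \<in> N \<Longrightarrow> pf [2,3,1,4,5] \<in> N"
  by (rule gd_23514, rule conjS[OF N gen_31245], assumption, simp add: lc_def)

lemma gd_51423: "pf [5,1,4,2,3] \<in> N \<Longrightarrow> pf [2,3,1,4,5] \<in> N"
  by (rule gd_23514, rule conjS[OF N gen_32415], assumption, simp add: lc_def)

lemma gd_31452: "pf [3,1,4,5,2] \<in> N \<Longrightarrow> pf [2,3,1,4,5] \<in> N"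
  by (rule gd_23514, rule conjS[OF N gen_32541], assumption, simp add: lc_def)

lemma gd_24531: "pf [2,4,5,3,1] \<in> N \<Longrightarrow> pf [2,3,1,4,5] \<in> N"
  by (rule gd_23514, rule conjS[OF N gen_41325], assumption, simp add: lc_def)

lemma gd_53412: "pf [5,3,4,1,2] \<in> N \<Longrightarrow> pf [2,3,1,4,5] \<in> N"
  by (rule gd_23514, rule conjS[OF N gen_42351], assumption, simp add: lc_def)

lemma gd_45123: "pf [4,5,1,2,3] \<in> N \<Longrightarrow> pf [2,3,1,4,5] \<in> N"
  by (rule gd_23514, rule conjS[OF N gen_51342], assumption, simp add: lc_def)

lemma gd_45231: "pf [4,5,2,3,1] \<in> N \<Longrightarrow> pf [2,3,1,4,5] \<in> N"
  by (rule gd_23514, rule conjS[OF N gen_52143], assumption, simp add: lc_def)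

lemma gd_41253: "pf [4,1,2,5,3] \<in> N \<Longrightarrow> pf [2,3,1,4,5] \<in> N"
  by (rule gd_25134, rule conjS[OF N gen_52143], assumption, simp add: lc_def)

lemma fw_23145: "pf [2,3,1,4,5] \<in> N \<Longrightarrow> pf [2,3,1,4,5] \<in> N" .

lemma fw_14235: "pf [2,3,1,4,5] \<in> N \<Longrightarrow> pf [1,4,2,3,5] \<in> N"
  by (rule conjS[OF N gen_24315 fw_23145], assumption, simp add: lc_def)

lemma fw_15243: "pf [2,3,1,4,5] \<in> N \<Longrightarrow> pf [1,5,2,4,3] \<in> N"
  by (rule conjS[OF N gen_25341 fw_23145], assumption, simp add: lc_def)

lemma fw_32415: "pf [2,3,1,4,5] \<in> N \<Longrightarrow> pf [3,2,4,1,5] \<in> N"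
  by (rule conjS[OF N gen_41325 fw_23145], assumption, simp add: lc_def)

lemma fw_41325: "pf [2,3,1,4,5] \<in> N \<Longrightarrow> pf [4,1,3,2,5] \<in> N"
  by (rule conjS[OF N gen_42135 fw_23145], assumption, simp add: lc_def)

lemma fw_13425: "pf [2,3,1,4,5] \<in> N \<Longrightarrow> pf [1,3,4,2,5] \<in> N"
  by (rule conjS[OF N gen_42351 fw_23145], assumption, simp add: lc_def)

lemma fw_32541: "pf [2,3,1,4,5] \<in> N \<Longrightarrow> pf [3,2,5,4,1] \<in> N"
  by (rule conjS[OF N gen_51342 fw_23145], assumption, simp add: lc_def)

lemma fw_51342: "pf [2,3,1,4,5] \<in> N \<Longrightarrow> pf [5,1,3,4,2] \<in> N"
  by (rule conjS[OF N gen_52143 fw_23145], assumption, simp add: lc_def)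

lemma fw_13542: "pf [2,3,1,4,5] \<in> N \<Longrightarrow> pf [1,3,5,4,2] \<in> N"
  by (rule conjS[OF N gen_52314 fw_23145], assumption, simp add: lc_def)

lemma fw_42135: "pf [2,3,1,4,5] \<in> N \<Longrightarrow> pf [4,2,1,3,5] \<in> N"
  by (rule conjS[OF N gen_14352 fw_23145], assumption, simp add: lc_def)

lemma fw_52143: "pf [2,3,1,4,5] \<in> N \<Longrightarrow> pf [5,2,1,4,3] \<in> N"
  by (rule conjS[OF N gen_15324 fw_23145], assumption, simp add: lc_def)

lemma fw_24315: "pf [2,3,1,4,5] \<in> N \<Longrightarrow> pf [2,4,3,1,5] \<in> N"
  by (rule conjS[OF N gen_12453 fw_23145], assumption, simp add: lc_def)

lemma fw_25341: "pf [2,3,1,4,5] \<in> N \<Longrightarrow> pf [2,5,3,4,1] \<in> N"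
  by (rule conjS[OF N gen_12534 fw_23145], assumption, simp add: lc_def)

lemma fw_12534: "pf [2,3,1,4,5] \<in> N \<Longrightarrow> pf [1,2,5,3,4] \<in> N"
  by (rule conjS[OF N gen_25341 fw_14235], assumption, simp add: lc_def)

lemma fw_14352: "pf [2,3,1,4,5] \<in> N \<Longrightarrow> pf [1,4,3,5,2] \<in> N"
  by (rule conjS[OF N gen_32541 fw_14235], assumption, simp add: lc_def)

lemma fw_31245: "pf [2,3,1,4,5] \<in> N \<Longrightarrow> pf [3,1,2,4,5] \<in> N"
  by (rule conjS[OF N gen_52314 fw_14235], assumption, simp add: lc_def)

lemma fw_12453: "pf [2,3,1,4,5] \<in> N \<Longrightarrow> pf [1,2,4,5,3] \<in> N"
  by (rule conjS[OF N gen_13542 fw_14235], assumption, simp add: lc_def)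

lemma fw_15324: "pf [2,3,1,4,5] \<in> N \<Longrightarrow> pf [1,5,3,2,4] \<in> N"
  by (rule conjS[OF N gen_15243 fw_14235], assumption, simp add: lc_def)

lemma fw_42351: "pf [2,3,1,4,5] \<in> N \<Longrightarrow> pf [4,2,3,5,1] \<in> N"
  by (rule conjS[OF N gen_52143 fw_32415], assumption, simp add: lc_def)

lemma fw_52314: "pf [2,3,1,4,5] \<in> N \<Longrightarrow> pf [5,2,3,1,4] \<in> N"
  by (rule conjS[OF N gen_13542 fw_32415], assumption, simp add: lc_def)

lemmas gd_all = gd_12354 gd_12435 gd_12453 gd_12534 gd_12543 gd_13245 gd_13254 gd_13425 gd_13452 gd_13524 gd_13542 gd_14235 gd_14253 gd_14325 gd_14352 gd_14523 gd_14532 gd_15234 gd_15243 gd_15324 gd_15342 gd_15423 gd_15432 gd_21345 gd_21354 gd_21435 gd_21453 gd_21534 gd_21543 gd_23145 gd_23154 gd_23415 gd_23451 gd_23514 gd_23541 gd_24135 gd_24153 gd_24315 gd_24351 gd_24513 gd_24531 gd_25134 gd_25143 gd_25314 gd_25341 gd_25413 gd_25431 gd_31245 gd_31254 gd_31425 gd_31452 gd_31524 gd_31542 gd_32145 gd_32154 gd_32415 gd_32451 gd_32514 gd_32541 gd_34125 gd_34152 gd_34215 gd_34251 gd_34512 gd_34521 gd_35124 gd_35142 gd_35214 gd_35241 gd_35412 gd_35421 gd_41235 gd_41253 gd_41325 gd_41352 gd_41523 gd_41532 gd_42135 gd_42153 gd_42315 gd_42351 gd_42513 gd_42531 gd_43125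 gd_43152 gd_43215 gd_43251 gd_43512 gd_43521 gd_45123 gd_45132 gd_45213 gd_45231 gd_45312 gd_45321 gd_51234 gd_51243 gd_51324 gd_51342 gd_51423 gd_51432 gd_52134 gd_52143 gd_52314 gd_52341 gd_52413 gd_52431 gd_53124 gd_53142 gd_53214 gd_53241 gd_53412 gd_53421 gd_54123 gd_54132 gd_54213 gd_54231 gd_54312 gd_54321
lemmas fw_all = fw_14352 fw_23145 fw_25341 fw_15324 fw_51342 fw_24315 fw_42351 fw_13542 fw_52143 fw_32415 fw_32541 fw_12453 fw_13425 fw_41325 fw_52314 fw_31245 fw_14235 fw_15243 fw_42135 fw_12534
lemmas gdN = gd_all[simplified]

lemma all_good:
  assumes "a \<in> {1..5}" "b \<in> {1..5}" "c \<in> {1..5}" "d \<in> {1..5}" "e \<in> {1..5}"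
    "distinct [a,b,c,d,e]" "[a,b,c,d,e] \<noteq> [1,2,3,4,5]" "pf [a,b,c,d,e] \<in> N"
  shows "pf [2,3,1,4,5] \<in> N"
proof -
  have r: "x \<in> {1..5} \<longleftrightarrow> x = 1 \<or> x = 2 \<or> x = 3 \<or> x = 4 \<or> x = 5" for x :: nat by auto
  show ?thesis using assms unfolding r
    by (elim disjE; simp; simp add: gdN)
qed

lemma three_in:
  assumes t0: "pf [2,3,1,4,5] \<in> N" and p: "p \<in> three_cycles 5"
  shows "p \<in> N"
proof -
  obtain cs where cs: "p = cycle_of_list cs" "cycle cs" "length cs = 3" "set cs \<subseteq> {1..5}"
    using p by auto
  obtain a b c where abc: "cs = [a,b,c]" using stupid_lemma[OF cs(3)] by blast
  have per: "p permutes {1..5}"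
    using cycle_permutes[of cs] cs(4) cs(1) permutes_subset by blast
  have eq: "pf [p 1, p 2, p 3, p 4, p 5] = p" by (rule perm_pf[OF per])
  have r: "x \<in> {1..5} \<longleftrightarrow> x = 1 \<or> x = 2 \<or> x = 3 \<or> x = 4 \<or> x = 5" for x :: nat by auto
  note fwN = fw_all[OF t0, simplified]
  have "a \<in> {1..5}" "b \<in> {1..5}" "c \<in> {1..5}" "distinct [a,b,c]" using cs(2,4) abc by auto
  then have "pf [cycle_of_list [a,b,c] 1, cycle_of_list [a,b,c] 2, cycle_of_list [a,b,c] 3,
      cycle_of_list [a,b,c] 4, cycle_of_list [a,b,c] 5] \<in> N"
    unfolding r by (elim disjE; simp add: transpose_def fwN)
  then show ?thesis using eq cs(1) abc by simp
qed

lemma A5_normal_cases: "N = carrier (alt_group 5) \<or> N = {\<one>\<^bsub>alt_group 5\<^esub>}"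
proof (rule ccontr)
  assume H: "\<not> (N = carrier (alt_group 5) \<or> N = {\<one>\<^bsub>alt_group 5\<^esub>})"
  interpret A: group "alt_group 5" by (rule alt_group_is_group)
  have sub: "subgroup N (alt_group 5)" using N by (simp add: normal_def)
  have one: "id \<in> N" using subgroup.one_closed[OF sub] by (simp add: alt_group_one)
  obtain x where x: "x \<in> N" "x \<noteq> id" using H one unfolding alt_group_one by blast
  have xc: "x \<in> carrier (alt_group 5)" using x subgroup.subset[OF sub] by blast
  then have per: "x permutes {1..5}" by (simp add: alt_group_carrier)
  have eq: "pf [x 1, x 2, x 3, x 4, x 5] = x" by (rule perm_pf[OF per])
  have inr: "x i \<in> {1..5}" if "i \<in> {1..5}" for i using per that by (simp only: permutes_in_image)
  have "inj x" using per by (simp add: permutes_inj)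
  then have dist: "distinct [x 1, x 2, x 3, x 4, x 5]" by (simp add: inj_eq)
  have ne: "[x 1, x 2, x 3, x 4, x 5] \<noteq> [1,2,3,4,5]"
  proof
    assume "[x 1, x 2, x 3, x 4, x 5] = [1,2,3,4,5]"
    then have "x = pf [1,2,3,4,5]" using eq by simp
    then show False using x(2) pf_id by simp
  qed
  have i: "x 1 \<in> {1..5}" "x 2 \<in> {1..5}" "x 3 \<in> {1..5}" "x 4 \<in> {1..5}" "x 5 \<in> {1..5}"
    using inr by auto
  have xN: "pf [x 1, x 2, x 3, x 4, x 5] \<in> N" using eq x(1) by simp
  have t0: "pf [2,3,1,4,5] \<in> N"
    by (rule all_good[OF i dist ne xN])
  have "three_cycles 5 \<subseteq> N" using three_in[OF t0] by blast
  then have "generate (alt_group 5) (three_cycles 5) \<subseteq> N"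
    by (rule A.generate_subgroup_incl[OF _ sub])
  then have "N = carrier (alt_group 5)"
    using alt_group_carrier_as_three_cycles subgroup.subset[OF sub] by blast
  then show False using H by blast
qed

end

lemma simple_A5: "simple_group (alt_group 5)"
proof -
  have c: "2 * card (carrier (alt_group 5)) = fact 5" by (rule alt_group_card_carrier) simp
  have o: "order (alt_group 5) = 60" using c by (simp add: order_def fact_numeral)
  show ?thesis
    unfolding simple_group_def simple_group_axioms_def
    using alt_group_is_group o A5_normal_cases by auto
qed



lemma A5_order: "order (alt_group 5) = 60"
proof -
  have c: "2 * card (carrier (alt_group 5)) = fact 5" by (rule alt_group_card_carrier) simp
  then show ?thesis by (simp add: order_def fact_numeral)
qed

theorem theorem3p1:
  shows "(\<forall>(S :: ('a, 'b) monoid_scheme) (p :: nat).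
            simple_group S \<and> finite (carrier S) \<and> \<not> comm_group S \<and>
            Factorial_Ring.prime p \<and> coprime (order S) p
            \<longrightarrow> psi_normal_divisible (S \<times>\<times> integer_mod_group p))
       \<and> (\<forall>p :: nat. Factorial_Ring.prime p \<and> coprime (60 :: nat) p
            \<longrightarrow> psi_normal_divisible (alt_group 5 \<times>\<times> integer_mod_group p))"
proof (intro conjI allI impI)
  fix S :: "('a, 'b) monoid_scheme" and p :: nat
  assume "simple_group S \<and> finite (carrier S) \<and> \<not> comm_group S \<and>
            Factorial_Ring.prime p \<and> coprime (order S) p"
  then show "psi_normal_divisible (S \<times>\<times> integer_mod_group p)" using part1 by blast
next
  fix p :: nat
  assume h: "Factorial_Ring.prime p \<and> coprime (60 :: nat) p"
  have fin: "finite (carrier (alt_group 5))"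
    using A5_order unfolding order_def by (simp add: card_ge_0_finite)
  show "psi_normal_divisible (alt_group 5 \<times>\<times> integer_mod_group p)"
    using part1[OF simple_A5 fin] h A5_order by simp
qed

end
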